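(* Let $P$ be a possibilistic positive disjunctive logic program. If $\Gamma_0:=\mathcal T(P)$ and $\Gamma_i:=\mathcal T(\Gamma_{i-1})$ for $i\in\mathbb N$, then there exists $n\in\mathbb N$ such that $\Gamma_n=\Gamma_{n-1}$. (This $\Gamma_n$ is denoted $\Pi(P)$.)
   Context: $(\mathcal Q,\le)$ is a finite lattice; $\mathrm{GLB}$ denotes greatest lower bound. A possibilistic positive disjunctive logic program is a finite set (over a finite set of atoms) of clauses $\alpha:\mathcal A\leftarrow\mathcal B^+$ with $\alpha\in\mathcal Q$, $\mathcal A,\mathcal B^+$ finite sets of atoms; $n(r)=\alpha$. A clause is identified with the triple $(\alpha,\mathcal A,\mathcal B^+)$. G-GPPE: if $r_1=\alpha:\mathcal A\leftarrow\mathcal B^+\cup\{B\}$ and $r_2=\alpha_1:\mathcal A_1$ (empty body) with $B\in\mathcal A_1$ and $B\notin\mathcal B^+$, then $\text{G-GPPE}(r_1,r_2)=(\mathrm{GLB}\{\alpha,\alpha_1\}:\mathcal A\cup(\mathcal A_1\setminus\{B\})\leftarrow\mathcal B^+)$. The operator $\mathcal T(P):=P\cup\{\text{G-GPPE}(r_1,r_2): r_1,r_2\in P \text{ for which it is defined}\}$. *)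

theory Defs
  imports Main
begin

text \<open>A possibilistic clause  alpha : A <- B+  is the triple (alpha, A, B+).
  The lattice of necessity values is a finite lattice 'q; GLB is inf.\<close>

type_synonym ('q, 'a) clause = "'q \<times> 'a set \<times> 'a set"

definition n_of :: "('q, 'a) clause \<Rightarrow> 'q" where
  "n_of r = fst r"

definition ppdlp :: "('q, 'a) clause set \<Rightarrow> bool" where
  "ppdlp P \<longleftrightarrow> finite P \<and> (\<forall>(\<alpha>, A, B) \<in> P. finite A \<and> finite B)"

definition ggppe :: "('q::lattice, 'a) clause \<Rightarrow> ('q, 'a) clause \<Rightarrow> ('q, 'a) clause \<Rightarrow> bool" where
  "ggppe r1 r2 c \<longleftrightarrow>
     (\<exists>\<alpha> A Bp B \<alpha>1 A1.
        r1 = (\<alpha>, A, Bp \<union> {B}) \<and> r2 = (\<alpha>1, A1, {}) \<and> B \<in> A1 \<and> B \<notin> Bp \<and>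
        c = (inf \<alpha> \<alpha>1, A \<union> (A1 - {B}), Bp))"

definition T_op :: "('q::lattice, 'a) clause set \<Rightarrow> ('q, 'a) clause set" where
  "T_op P = P \<union> {c. \<exists>r1\<in>P. \<exists>r2\<in>P. ggppe r1 r2 c}"

definition Gamma :: "('q::lattice, 'a) clause set \<Rightarrow> nat \<Rightarrow> ('q, 'a) clause set" where
  "Gamma P i = (T_op ^^ Suc i) P"

end

theory Submission
  imports Defs
begin

definition Uc :: "'a set \<Rightarrow> ('q, 'a) clause set" where
  "Uc X = {c. fst (snd c) \<subseteq> X \<and> snd (snd c) \<subseteq> X}"

lemma Uc_finite:
  assumes "finite X" shows "finite (Uc X :: ('q::finite, 'a) clause set)"
proof -
  have "Uc X \<subseteq> (UNIV :: 'q set) \<times> (Pow X \<times> Pow X)" unfolding Uc_def by auto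
  moreover have "finite ((UNIV :: 'q set) \<times> (Pow X \<times> Pow X))" using assms by simp
  ultimately show ?thesis by (rule finite_subset)
qed

lemma T_Uc: "S \<subseteq> Uc X \<Longrightarrow> T_op S \<subseteq> Uc X"
  unfolding T_op_def Uc_def ggppe_def by fastforce

lemma iter_Uc: "S \<subseteq> Uc X \<Longrightarrow> (T_op ^^ k) S \<subseteq> Uc X"
  by (induction k) (auto intro: T_Uc[THEN subsetD])

lemma iter_mono: "(T_op ^^ k) S \<subseteq> (T_op ^^ Suc k) S"
  by (simp add: T_op_def)

theorem proposition9:
  fixes P :: "('q::{finite, lattice}, 'a) clause set"
  assumes "ppdlp P"
  shows "\<exists>n::nat. n \<ge> 1 \<and> Gamma P n = Gamma P (n - 1)"
proof (rule ccontr)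
  assume H: "\<not> ?thesis"
  define X where "X = (\<Union>r\<in>P. fst (snd r) \<union> snd (snd r))"
  have fX: "finite X" using assms unfolding ppdlp_def X_def by auto
  have PU: "P \<subseteq> Uc X" unfolding Uc_def X_def by auto
  define f where "f k = (T_op ^^ k) P" for k
  have fU: "f k \<subseteq> Uc X" for k unfolding f_def by (rule iter_Uc[OF PU])
  have ffin: "finite (f k)" for k using fU Uc_finite[OF fX] finite_subset by blast
  have strict: "f (Suc n) \<subset> f (Suc (Suc n))" for n
  proof -
    have "Gamma P (Suc n) \<noteq> Gamma P (Suc n - 1)" using H by (metis le_add1 plus_1_eq_Suc)
    hence "f (Suc (Suc n)) \<noteq> f (Suc n)" unfolding Gamma_def f_def by simp
    moreover have "f (Suc n) \<subseteq> f (Suc (Suc n))" unfolding f_def by (rule iter_mono)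
    ultimately show ?thesis by auto
  qed
  have "card (f (Suc n)) \<ge> n" for n
  proof (induction n)
    case 0 then show ?case by simp
  next
    case (Suc n)
    have "card (f (Suc n)) < card (f (Suc (Suc n)))"
      using strict ffin psubset_card_mono by blast
    then show ?case using Suc by simp
  qed
  moreover have "card (f (Suc n)) \<le> card (Uc X :: ('q, 'a) clause set)" for n
    using fU Uc_finite[OF fX] card_mono by blast
  ultimately have "Suc (card (Uc X :: ('q, 'a) clause set)) \<le> card (Uc X :: ('q, 'a) clause set)"
    by (meson order_trans)
  then show False by simp
qed

end
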